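(* Let $A$ and $B$ be complex Hilbert spaces and $n\geq 2$. Let $\vec{\beta}=(\beta_1,\ldots,\beta_n)\in\mathcal{B}_n$. Then for all bounded operators $M_1,\ldots,M_n:A\rightarrow B$ and all positive semidefinite trace class operators $\rho$ on $A$, \[ \left(\sum_{i=1}^n M_i\right)\rho\left(\sum_{i=1}^n M_i\right)^\dagger \geq \sum_{i=1}^n \beta_i M_i\rho M_i^\dagger . \]
   Context: $\mathcal{B}_n := \{\vec{\beta}\in\mathbb{R}^n : \operatorname{diag}(\vec{\beta}) \leq J\}$, where $\operatorname{diag}(\vec{\beta})$ is the $n\times n$ diagonal matrix with entries $\beta_i$, $J$ is the $n\times n$ all-ones matrix, and $\leq$ denotes the Löwner (positive semidefinite) order. All operator inequalities are in the Löwner order. *)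

theory Defs
  imports "HOL-Analysis.Analysis"
begin

text \<open>A complex Hilbert space: a (real) Banach space carrying a complex scalar
multiplication compatible with the real one, and a complex inner product
(linear in the second argument, conjugate-linear in the first) inducing the norm.\<close>

class complex_hilbert = banach +
  fixes scaleC :: "complex \<Rightarrow> 'a \<Rightarrow> 'a"
    and cinner :: "'a \<Rightarrow> 'a \<Rightarrow> complex"
  assumes scaleC_add_right: "scaleC a (x + y) = scaleC a x + scaleC a y"
    and scaleC_add_left: "scaleC (a + b) x = scaleC a x + scaleC b x"
    and scaleC_scaleC: "scaleC a (scaleC b x) = scaleC (a * b) x"
    and scaleC_one: "scaleC 1 x = x"
    and scaleR_scaleC: "scaleR r x = scaleC (complex_of_real r) x"
    and cinner_commute: "cinner x y = cnj (cinner y x)"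
    and cinner_add_right: "cinner x (y + z) = cinner x y + cinner x z"
    and cinner_scaleC_right: "cinner x (scaleC a y) = a * cinner x y"
    and cinner_self_norm: "cinner x x = complex_of_real ((norm x)\<^sup>2)"

definition bounded_clinear :: "('a::complex_hilbert \<Rightarrow> 'b::complex_hilbert) \<Rightarrow> bool" where
  "bounded_clinear f \<longleftrightarrow>
     (\<forall>x y. f (x + y) = f x + f y) \<and>
     (\<forall>c x. f (scaleC c x) = scaleC c (f x)) \<and>
     (\<exists>K. \<forall>x. norm (f x) \<le> norm x * K)"

definition cadjoint :: "('a::complex_hilbert \<Rightarrow> 'b::complex_hilbert) \<Rightarrow> 'b \<Rightarrow> 'a" where
  "cadjoint f = (\<lambda>y. THE z. \<forall>x. cinner (f x) y = cinner x z)"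

definition positive_op :: "('a::complex_hilbert \<Rightarrow> 'a) \<Rightarrow> bool" where
  "positive_op T \<longleftrightarrow> (\<forall>x. Im (cinner x (T x)) = 0 \<and> 0 \<le> Re (cinner x (T x)))"

definition loewner_le :: "('a::complex_hilbert \<Rightarrow> 'a) \<Rightarrow> ('a \<Rightarrow> 'a) \<Rightarrow> bool" where
  "loewner_le X Y \<longleftrightarrow> positive_op (\<lambda>x. Y x - X x)"

definition orthonormal_basis :: "'a::complex_hilbert set \<Rightarrow> bool" where
  "orthonormal_basis E \<longleftrightarrow>
     (\<forall>e\<in>E. norm e = 1) \<and> (\<forall>e\<in>E. \<forall>f\<in>E. e \<noteq> f \<longrightarrow> cinner e f = 0) \<and>
     (\<forall>x. (\<forall>e\<in>E. cinner e x = 0) \<longrightarrow> x = 0)"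

definition pos_trace_class :: "('a::complex_hilbert \<Rightarrow> 'a) \<Rightarrow> bool" where
  "pos_trace_class \<rho> \<longleftrightarrow> bounded_clinear \<rho> \<and> positive_op \<rho> \<and>
     (\<exists>E. orthonormal_basis E \<and> (\<lambda>e. Re (cinner e (\<rho> e))) summable_on E)"

definition psd_mat :: "nat \<Rightarrow> (nat \<Rightarrow> nat \<Rightarrow> real) \<Rightarrow> bool" where
  "psd_mat n A \<longleftrightarrow> (\<forall>x :: nat \<Rightarrow> real. 0 \<le> (\<Sum>i<n. \<Sum>j<n. x i * A i j * x j))"

text \<open>\<open>\<B>\<^sub>n = {\<beta>. diag \<beta> \<le> J}\<close>, i.e. \<open>J - diag \<beta>\<close> is PSD; \<open>\<beta>\<close> indexed by \<open>0..<n\<close>.\<close>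
definition beta_set :: "nat \<Rightarrow> (nat \<Rightarrow> real) set" where
  "beta_set n = {\<beta>. psd_mat n (\<lambda>i j. 1 - (if i = j then \<beta> i else 0))}"

end

theory Submission
  imports Defs
begin
context complex_hilbert begin

lemma cinner_zero_right[simp]: "cinner x 0 = 0"
  using cinner_add_right[of x 0 0] by simp

lemma cinner_add_left: "cinner (x + y) z = cinner x z + cinner y z"
proof -
  have "cinner (x + y) z = cnj (cinner z (x + y))" by (rule cinner_commute)
  also have "\<dots> = cnj (cinner z x) + cnj (cinner z y)" by (simp add: cinner_add_right)
  finally show ?thesis by (simp add: cinner_commute[of z])
qed

lemma cinner_zero_left[simp]: "cinner 0 x = 0"
  using cinner_add_left[of 0 0 x] by simp

lemma cinner_minus_right: "cinner x (- y) = - cinner x y"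
  proof -
  have h: "cinner x y + cinner x (- y) = 0" using cinner_add_right[of x y "-y"] by simp
  have "cinner x (- y) = (cinner x y + cinner x (- y)) - cinner x y" by simp
  also have "\<dots> = - cinner x y" using h by simp
  finally show ?thesis .
qed

lemma cinner_minus_left: "cinner (- x) y = - cinner x y"
  using cinner_commute[of "-x" y] cinner_minus_right[of y x] cinner_commute[of y x] by simp

lemma cinner_diff_right: "cinner x (y - z) = cinner x y - cinner x z"
  using cinner_add_right[of x y "-z"] by (simp add: cinner_minus_right)

lemma cinner_diff_left: "cinner (x - y) z = cinner x z - cinner y z"
  using cinner_add_left[of x "-y" z] by (simp add: cinner_minus_left)

lemma cinner_scaleC_left: "cinner (scaleC a x) y = cnj a * cinner x y"
  using cinner_commute[of "scaleC a x" y] cinner_scaleC_right[of y a x] cinner_commute[of y x] by simp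

lemma cinner_scaleR_right: "cinner x (scaleR r y) = of_real r * cinner x y"
  by (simp add: scaleR_scaleC cinner_scaleC_right)

lemma cinner_scaleR_left: "cinner (scaleR r x) y = of_real r * cinner x y"
  by (simp add: scaleR_scaleC cinner_scaleC_left)

lemma cinner_sum_right: "cinner x (\<Sum>i\<in>A. f i) = (\<Sum>i\<in>A. cinner x (f i))"
  by (induction A rule: infinite_finite_induct) (auto simp: cinner_add_right)

lemma cinner_sum_left: "cinner (\<Sum>i\<in>A. f i) x = (\<Sum>i\<in>A. cinner (f i) x)"
  by (induction A rule: infinite_finite_induct) (auto simp: cinner_add_left)

lemma scaleC_zero_right[simp]: "scaleC a 0 = 0"
  using scaleC_add_right[of a 0 0] by simp

lemma scaleC_sum_right: "scaleC a (\<Sum>i\<in>A. f i) = (\<Sum>i\<in>A. scaleC a (f i))"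
  by (induction A rule: infinite_finite_induct) (auto simp: scaleC_add_right)

lemma norm_sq_cinner: "(norm x)^2 = Re (cinner x x)"
  using cinner_self_norm[of x] by simp

lemma Im_cinner_self[simp]: "Im (cinner x x) = 0"
  using cinner_self_norm[of x] by simp

lemma norm_add_sq: "(norm (x + y))^2 = (norm x)^2 + (norm y)^2 + 2 * Re (cinner x y)"
proof -
  have "cinner (x+y) (x+y) = cinner x x + cinner y y + (cinner x y + cnj (cinner x y))"
    by (simp add: cinner_add_left cinner_add_right algebra_simps cinner_commute[of y x])
  then show ?thesis by (simp add: norm_sq_cinner)
qed

lemma norm_diff_sq: "(norm (x - y))^2 = (norm x)^2 + (norm y)^2 - 2 * Re (cinner x y)"
  using norm_add_sq[of x "-y"] by (simp add: cinner_minus_right)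

lemma norm_scaleC_sq: "(norm (scaleC c x))^2 = (cmod c)^2 * (norm x)^2"
proof -
  have "cinner (scaleC c x) (scaleC c x) = (cnj c * c) * cinner x x"
    by (simp add: cinner_scaleC_left cinner_scaleC_right)
  also have "cnj c * c = of_real ((cmod c)^2)" by (metis complex_norm_square mult.commute)
  finally show ?thesis by (simp add: norm_sq_cinner)
qed

lemma norm_scaleC: "norm (scaleC c x) = cmod c * norm x"
proof -
  have "(norm (scaleC c x))^2 = (cmod c * norm x)^2" by (simp add: norm_scaleC_sq power_mult_distrib)
  then show ?thesis by (simp add: power2_eq_iff_nonneg)
qed

lemma Re_cinner_le: "Re (cinner x y) \<le> norm x * norm y"
proof -
  have "(norm (x+y))^2 \<le> (norm x + norm y)^2"
    by (simp add: norm_triangle_ineq power_mono)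
  then show ?thesis by (simp add: norm_add_sq power2_sum)
qed

lemma cinner_cauchy_schwarz: "cmod (cinner x y) \<le> norm x * norm y"
proof (cases "cinner x y = 0")
  case True then show ?thesis by simp
next
  case False
  define a where "a = cinner x y"
  define c where "c = cnj a / of_real (cmod a)"
  have ca: "cmod c = 1" using False by (simp add: c_def a_def norm_divide)
  have "cinner x (scaleC c y) = c * a" by (simp add: cinner_scaleC_right a_def)
  also have "c * a = of_real (cmod a)"
  proof -
    have n: "of_real (cmod a) \<noteq> (0::complex)" using False by (simp add: a_def)
    have "c * a = (a * cnj a) / of_real (cmod a)" by (simp add: c_def mult.commute)
    also have "a * cnj a = of_real (cmod a) * of_real (cmod a)"
      by (simp add: complex_norm_square[symmetric] power2_eq_square)
    finally show ?thesis using n by simp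
  qed
  finally have "cmod a = Re (cinner x (scaleC c y))" by simp
  also have "\<dots> \<le> norm x * norm (scaleC c y)" by (rule Re_cinner_le)
  also have "norm (scaleC c y) = norm y" by (simp add: norm_scaleC ca)
  finally show ?thesis by (simp add: a_def)
qed

lemma cinner_eq_zero_iff: "cinner x x = 0 \<longleftrightarrow> x = 0"
  using cinner_self_norm[of x] by auto

lemma cinner_ext: assumes "\<And>x. cinner x z = cinner x z'" shows "z = z'"
proof -
  have "cinner (z - z') (z - z') = 0" using assms[of "z - z'"] by (simp add: cinner_diff_right)
  then show ?thesis by (simp add: cinner_eq_zero_iff)
qed

end
lemma riesz:
  fixes phi :: "'a::complex_hilbert \<Rightarrow> complex"
  assumes add: "\<And>x y. phi (x + y) = phi x + phi y"
    and hom: "\<And>c x. phi (scaleC c x) = c * phi x"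
    and bnd: "\<And>x. cmod (phi x) \<le> norm x * K"
  shows "\<exists>z. \<forall>x. phi x = cinner z x"
proof (cases "\<forall>x. phi x = 0")
  case True
  then show ?thesis by (intro exI[of _ 0]) simp
next
  case False
  then obtain x0 where x0: "phi x0 \<noteq> 0" by blast
  have phi0: "phi 0 = 0" using hom[of 0 0] by simp
  have diff: "phi (a - b) = phi a - phi b" for a b
    using add[of "a - b" b] by simp
  have scR: "phi (scaleR r a) = of_real r * phi a" for r a
    by (simp add: scaleR_scaleC hom)
  define S where "S = {x. phi x = 1}"
  define x1 where "x1 = scaleC (1 / phi x0) x0"
  have x1S: "x1 \<in> S" using x0 by (simp add: S_def x1_def hom)
  define d where "d = Inf ((\<lambda>x. (norm x)^2) ` S)"
  have bdd: "bdd_below ((\<lambda>x. (norm x)^2) ` S)"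
    by (rule bdd_belowI[of _ 0]) auto
  have d_le: "d \<le> (norm w)^2" if "w \<in> S" for w
    unfolding d_def using bdd that by (auto intro: cInf_lower)
  define eps :: "nat \<Rightarrow> real" where "eps n = inverse (real (Suc n))" for n
  have eps_pos: "eps n > 0" for n by (simp add: eps_def)
  have "\<exists>x\<in>S. (norm x)^2 < d + eps n" for n
  proof -
    have "Inf ((\<lambda>x. (norm x)^2) ` S) < d + eps n" using eps_pos[of n] by (simp add: d_def)
    moreover have "(\<lambda>x. (norm x)^2) ` S \<noteq> {}" using x1S by blast
    ultimately obtain v where "v \<in> (\<lambda>x. (norm x)^2) ` S" "v < d + eps n"
      using cInf_lessD[of "(\<lambda>x. (norm x)^2) ` S" "d + eps n"] unfolding d_def by blast
    then show ?thesis by blast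
  qed
  then obtain X where XS: "\<And>n. X n \<in> S" and Xn: "\<And>n. (norm (X n))^2 < d + eps n"
    by metis
  have mid: "scaleR (1/2) (X m + X k) \<in> S" for m k
    using XS[of m] XS[of k] by (simp add: S_def scR add)
  have par: "(norm (X m - X k))^2 \<le> 2 * eps m + 2 * eps k" for m k
  proof -
    have "d \<le> (norm (scaleR (1/2) (X m + X k)))^2" by (rule d_le[OF mid])
    also have "\<dots> = (norm (X m + X k))^2 / 4" by (simp add: power_divide)
    finally have "4 * d \<le> (norm (X m + X k))^2" by simp
    moreover have "(norm (X m - X k))^2 + (norm (X m + X k))^2 = 2 * (norm (X m))^2 + 2 * (norm (X k))^2"
      by (simp add: norm_add_sq norm_diff_sq)
    ultimately show ?thesis using Xn[of m] Xn[of k] by linarith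
  qed
  have "Cauchy X"
  proof (rule metric_CauchyI)
    fix e :: real assume e: "0 < e"
    obtain N :: nat where N: "4 / e^2 < real N" using reals_Archimedean2 by blast
    have "norm (X m - X k) < e" if "m \<ge> N" "k \<ge> N" for m k
    proof -
      have em: "eps m \<le> eps N" "eps k \<le> eps N" using that
        by (simp_all add: eps_def le_imp_inverse_le)
      have "4 * eps N < e^2"
      proof -
        have "4 < e^2 * real N" using N e by (simp add: field_simps)
        also have "\<dots> < e^2 * real (Suc N)" using e by simp
        finally show ?thesis using e by (simp add: eps_def field_simps)
      qed
      then have "(norm (X m - X k))^2 < e^2" using par[of m k] em by linarith
      then show ?thesis using e power_less_imp_less_base[of "norm (X m - X k)" 2 e] by simp
    qed
    then show "\<exists>M. \<forall>m\<ge>M. \<forall>n\<ge>M. dist (X m) (X n) < e" by (auto simp: dist_norm)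
  qed
  then obtain u where lim: "X \<longlonglongrightarrow> u" using Cauchy_convergent_iff convergent_def by blast
  have uS: "phi u = 1"
  proof -
    have bd: "cmod (1 - phi u) \<le> norm (X n - u) * K" for n
      using bnd[of "X n - u"] XS[of n] by (simp add: diff S_def)
    have l0: "(\<lambda>n. norm (X n - u) * K) \<longlonglongrightarrow> 0 * K"
      using tendsto_mult[OF tendsto_norm_zero[OF LIM_zero[OF lim]] tendsto_const] by simp
    have "cmod (1 - phi u) \<le> 0 * K"
      using LIMSEQ_le_const[OF l0, of "cmod (1 - phi u)"] bd by blast
    then show ?thesis by simp
  qed
  have umin: "(norm u)^2 \<le> (norm w)^2" if "w \<in> S" for w
  proof -
    have "(\<lambda>n. (norm (X n))^2) \<longlonglongrightarrow> (norm u)^2" by (intro tendsto_intros lim)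
    moreover have "(\<lambda>n. (norm w)^2 + eps n) \<longlonglongrightarrow> (norm w)^2 + 0"
      unfolding eps_def by (intro tendsto_intros LIMSEQ_inverse_real_of_nat)
    moreover have "(norm (X n))^2 \<le> (norm w)^2 + eps n" for n
      using Xn[of n] d_le[OF that] by linarith
    ultimately show ?thesis
      by (intro LIMSEQ_le[of "\<lambda>n. (norm (X n))^2" _ "\<lambda>n. (norm w)^2 + eps n"]) auto
  qed
  have orth: "cinner u k = 0" if k: "phi k = 0" for k
  proof (rule ccontr)
    assume a0: "cinner u k \<noteq> 0"
    define a where "a = cinner u k"
    define ep :: real where "ep = 1 / ((norm k)^2 + 1)"
    have kp: "0 < (norm k)^2 + 1" using zero_le_power2[of "norm k"] by linarith
    have ep_pos: "ep > 0" using kp by (simp add: ep_def)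
    have ep_k: "ep * (norm k)^2 < 1" using kp by (simp add: ep_def field_simps)
    define t where "t = - of_real ep * cnj a"
    have wS: "u + scaleC t k \<in> S" using uS k by (simp add: S_def add hom)
    have ta: "t * a = - of_real (ep * (cmod a)^2)"
    proof -
      have "t * a = - of_real ep * (a * cnj a)" by (simp add: t_def)
      also have "a * cnj a = of_real ((cmod a)^2)" by (rule complex_norm_square[symmetric])
      finally show ?thesis by simp
    qed
    have ra: "Re (t * a) = - (ep * (cmod a)^2)" using ta by simp
    have ct: "(cmod t)^2 = ep^2 * (cmod a)^2"
      using ep_pos by (simp add: t_def norm_mult power_mult_distrib)
    have "(norm (u + scaleC t k))^2 = (norm u)^2 + (cmod t)^2 * (norm k)^2 + 2 * Re (t * a)"
      by (simp add: norm_add_sq norm_scaleC_sq cinner_scaleC_right a_def)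
    also have "\<dots> = (norm u)^2 + ep * (cmod a)^2 * (ep * (norm k)^2 - 2)"
      unfolding ct ra by (simp add: algebra_simps power2_eq_square)
    also have "\<dots> < (norm u)^2"
    proof -
      have "ep * (cmod a)^2 > 0" using a0 ep_pos by (simp add: a_def)
      moreover have "ep * (norm k)^2 - 2 < 0" using ep_k by simp
      ultimately show ?thesis by (simp add: mult_pos_neg)
    qed
    finally show False using umin[OF wS] by simp
  qed
  have u0: "u \<noteq> 0" using uS phi0 by auto
  define z where "z = scaleC (of_real (1 / (norm u)^2)) u"
  have "phi x = cinner z x" for x
  proof -
    have "phi (x - scaleC (phi x) u) = 0" by (simp add: diff hom uS)
    then have "cinner u (x - scaleC (phi x) u) = 0" by (rule orth)
    then have "cinner u x = phi x * cinner u u" by (simp add: cinner_diff_right cinner_scaleC_right)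
    then have "cinner u x = phi x * of_real ((norm u)^2)" by (simp add: cinner_self_norm)
    then show ?thesis using u0 by (simp add: z_def cinner_scaleC_left)
  qed
  then show ?thesis by blast
qed

lemma adjoint_unique:
  assumes "\<And>x. cinner (f x) y = cinner x z"
  shows "cadjoint f y = z"
proof -
  have "(THE z. \<forall>x. cinner (f x) y = cinner x z) = z"
  proof (rule the_equality)
    show "\<forall>x. cinner (f x) y = cinner x z" using assms by simp
    fix z' assume "\<forall>x. cinner (f x) y = cinner x z'"
    then have "\<And>x. cinner x z' = cinner x z" using assms by simp
    then show "z' = z" by (rule cinner_ext)
  qed
  then show ?thesis by (simp add: cadjoint_def)
qed

lemma adjoint_exists:
  assumes "bounded_clinear f"
  shows "cinner (f x) y = cinner x (cadjoint f y)"
proof -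
  obtain K where K: "\<And>x. norm (f x) \<le> norm x * K"
    and fadd: "\<And>x y. f (x + y) = f x + f y" and fhom: "\<And>c x. f (scaleC c x) = scaleC c (f x)"
    using assms unfolding bounded_clinear_def by blast
  have "\<exists>z. \<forall>x. cinner y (f x) = cinner z x"
  proof (rule riesz[where K = "norm y * K"])
    show "cinner y (f (a + b)) = cinner y (f a) + cinner y (f b)" for a b
      by (simp add: fadd cinner_add_right)
    show "cinner y (f (scaleC c a)) = c * cinner y (f a)" for c a
      by (simp add: fhom cinner_scaleC_right)
    show "cmod (cinner y (f a)) \<le> norm a * (norm y * K)" for a
    proof -
      have "cmod (cinner y (f a)) \<le> norm y * norm (f a)" by (rule cinner_cauchy_schwarz)
      also have "\<dots> \<le> norm y * (norm a * K)" by (intro mult_left_mono K) simp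
      finally show ?thesis by (simp add: ac_simps)
    qed
  qed
  then obtain z where z: "\<And>x. cinner y (f x) = cinner z x" by blast
  have zz: "cinner (f x) y = cinner x z" for x
  proof -
    have "cinner (f x) y = cnj (cinner y (f x))" by (rule cinner_commute)
    also have "\<dots> = cnj (cinner z x)" by (simp add: z)
    also have "\<dots> = cinner x z" by (simp add: cinner_commute[of x z])
    finally show ?thesis .
  qed
  show ?thesis using adjoint_unique[of f y z, OF zz] zz by simp
qed

lemma sum2_Suc:
  fixes F :: "nat \<Rightarrow> nat \<Rightarrow> real"
  shows "(\<Sum>i<Suc m. \<Sum>j<Suc m. F i j) =
    (\<Sum>i<m. \<Sum>j<m. F i j) + (\<Sum>i<m. F i m) + (\<Sum>j<m. F m j) + F m m"
  by (simp add: sum.distrib)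

lemma psdD: "psd_mat n A \<Longrightarrow> 0 \<le> (\<Sum>i<n. \<Sum>j<n. x i * A i j * x j)"
  unfolding psd_mat_def by blast

lemma if0_mult_left: "(if P then (a::real) else 0) * c = (if P then a * c else 0)" by simp
lemma if0_mult_right: "c * (if P then (a::real) else 0) = (if P then c * a else 0)" by simp
lemma sum_if0_const: "(\<Sum>j\<in>A. if P then f j else (0::real)) = (if P then (\<Sum>j\<in>A. f j) else 0)" by simp

lemmas delta_simps = if0_mult_left if0_mult_right sum_if0_const sum.delta sum.delta'

lemma psd_diag: "psd_mat n C \<Longrightarrow> k < n \<Longrightarrow> 0 \<le> C k k"
proof -
  assume p: "psd_mat n C" and k: "k < n"
  have "0 \<le> (\<Sum>i<n. \<Sum>j<n. (if i = k then 1 else 0) * C i j * (if j = k then 1 else 0))"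
    by (rule psdD[OF p])
  also have "\<dots> = C k k" using k by (simp add: delta_simps)
  finally show ?thesis .
qed

lemma psd_restrict: "psd_mat (Suc m) C \<Longrightarrow> psd_mat m C"
  unfolding psd_mat_def
proof
  fix x :: "nat \<Rightarrow> real"
  assume p: "\<forall>x. 0 \<le> (\<Sum>i<Suc m. \<Sum>j<Suc m. x i * C i j * x j)"
  define y where "y = x(m := 0)"
  have "0 \<le> (\<Sum>i<Suc m. \<Sum>j<Suc m. y i * C i j * y j)" using p by blast
  also have "\<dots> = (\<Sum>i<m. \<Sum>j<m. x i * C i j * x j)"
    by (simp add: y_def)
  finally show "0 \<le> (\<Sum>i<m. \<Sum>j<m. x i * C i j * x j)" .
qed

lemma psd_two:
  assumes p: "psd_mat (Suc m) C" and i: "i < m"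
  shows "0 \<le> a * a * C i i + a * b * C i m + b * a * C m i + b * b * C m m"
proof -
  define x where "x = (\<lambda>k. if k = i then a else if k = m then b else (0::real))"
  define x' where "x' = (\<lambda>k. if k = i then a else (0::real))"
  have xx: "x p = x' p" if "p < m" for p using that i by (simp add: x_def x'_def)
  have xm: "x m = b" using i by (simp add: x_def)
  have "0 \<le> (\<Sum>p<Suc m. \<Sum>q<Suc m. x p * C p q * x q)" by (rule psdD[OF p])
  also have "\<dots> = (\<Sum>p<m. \<Sum>q<m. x p * C p q * x q) + (\<Sum>p<m. x p * C p m * x m)
       + (\<Sum>q<m. x m * C m q * x q) + x m * C m m * x m" by (rule sum2_Suc)
  also have "(\<Sum>p<m. \<Sum>q<m. x p * C p q * x q) = (\<Sum>p<m. \<Sum>q<m. x' p * C p q * x' q)"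
    using xx by (intro sum.cong) auto
  also have "\<dots> = a * a * C i i"
    using i by (simp add: x'_def delta_simps)
  also have "(\<Sum>p<m. x p * C p m * x m) = (\<Sum>p<m. x' p * C p m * b)"
    using xx xm by (intro sum.cong) auto
  also have "\<dots> = a * b * C i m"
    using i by (simp add: x'_def delta_simps)
  also have "(\<Sum>q<m. x m * C m q * x q) = (\<Sum>q<m. b * C m q * x' q)"
    using xx xm by (intro sum.cong) auto
  also have "\<dots> = b * a * C m i"
    using i by (simp add: x'_def delta_simps)
  also have "x m * C m m * x m = b * b * C m m" using xm by simp
  finally show ?thesis .
qed

lemma psd_zero_diag:
  assumes p: "psd_mat (Suc m) C" and sym: "C i m = C m i" and i: "i < m" and z: "C m m = 0"
  shows "C i m = 0"
proof (rule ccontr)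
  assume nz: "C i m \<noteq> 0"
  define b where "b = - (C i i + 1) / (2 * C i m)"
  have "0 \<le> 1 * 1 * C i i + 1 * b * C i m + b * 1 * C m i + b * b * C m m"
    by (rule psd_two[OF p i])
  also have "\<dots> = C i i + 2 * b * C i m" using sym z by simp
  also have "\<dots> = -1" using nz by (simp add: b_def field_simps)
  finally show False by simp
qed

lemma schur_trace:
  fixes G :: "nat \<Rightarrow> nat \<Rightarrow> real"
  shows "(\<forall>i<m. \<forall>j<m. C i j = C j i) \<Longrightarrow> psd_mat m C \<Longrightarrow> psd_mat m G \<Longrightarrow>
    0 \<le> (\<Sum>i<m. \<Sum>j<m. C i j * G i j)"
proof (induction m arbitrary: C)
  case 0
  then show ?case by simp
next
  case (Suc m)
  have symC: "\<And>i j. i < Suc m \<Longrightarrow> j < Suc m \<Longrightarrow> C i j = C j i" using Suc.prems(1) by blast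
  have Gm: "psd_mat m G" using Suc.prems(3) by (rule psd_restrict)
  have cpos: "0 \<le> C m m" using psd_diag[OF Suc.prems(2)] by simp
  show ?case
  proof (cases "C m m = 0")
    case True
    have z: "C i m = 0" "C m i = 0" if "i < m" for i
      using psd_zero_diag[OF Suc.prems(2) symC[of i m] that True] symC[of i m] that by auto
    have "0 \<le> (\<Sum>i<m. \<Sum>j<m. C i j * G i j)"
      using Suc.IH[of C] Suc.prems(1) psd_restrict[OF Suc.prems(2)] Gm by auto
    also have "\<dots> = (\<Sum>i<Suc m. \<Sum>j<Suc m. C i j * G i j)"
      unfolding sum2_Suc using z True by simp
    finally show ?thesis .
  next
    case False
    define c where "c = C m m"
    have c: "c > 0" using False cpos by (simp add: c_def)
    define v where "v i = C i m" for i
    define C' where "C' i j = C i j - v i * v j / c" for i j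
    have symC': "\<forall>i<m. \<forall>j<m. C' i j = C' j i" using symC by (auto simp: C'_def)
    have psdC': "psd_mat m C'"
      unfolding psd_mat_def
    proof
      fix x :: "nat \<Rightarrow> real"
      define s where "s = (\<Sum>i<m. v i * x i)"
      define y where "y = x(m := - s / c)"
      have "0 \<le> (\<Sum>i<Suc m. \<Sum>j<Suc m. y i * C i j * y j)"
        by (rule psdD[OF Suc.prems(2)])
      also have "\<dots> = (\<Sum>i<m. \<Sum>j<m. y i * C i j * y j) + (\<Sum>i<m. y i * C i m * y m)
         + (\<Sum>j<m. y m * C m j * y j) + y m * C m m * y m" by (rule sum2_Suc)
      also have "(\<Sum>i<m. \<Sum>j<m. y i * C i j * y j) = (\<Sum>i<m. \<Sum>j<m. x i * C i j * x j)"
        by (simp add: y_def)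
      also have "(\<Sum>i<m. y i * C i m * y m) = - s * s / c"
      proof -
        have "(\<Sum>i<m. y i * C i m * y m) = (\<Sum>i<m. v i * x i) * (- s / c)"
          by (simp add: y_def v_def sum_distrib_right sum_distrib_left sum_negf sum_divide_distrib mult_ac)
        then show ?thesis by (simp add: s_def[symmetric])
      qed
      also have "(\<Sum>j<m. y m * C m j * y j) = - s * s / c"
      proof -
        have "(\<Sum>j<m. y m * C m j * y j) = (\<Sum>j<m. y m * C j m * y j)"
          using symC by (intro sum.cong) auto
        also have "\<dots> = (\<Sum>i<m. v i * x i) * (- s / c)"
          by (simp add: y_def v_def sum_distrib_right sum_distrib_left sum_negf sum_divide_distrib mult_ac)
        also have "\<dots> = - s * s / c" by (simp add: s_def[symmetric])
        finally show ?thesis .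
      qed
      also have "y m * C m m * y m = s * s / c" using c by (simp add: y_def c_def[symmetric] field_simps)
      finally have A: "0 \<le> (\<Sum>i<m. \<Sum>j<m. x i * C i j * x j) - s * s / c" by simp
      have "(\<Sum>i<m. \<Sum>j<m. x i * C' i j * x j) =
            (\<Sum>i<m. \<Sum>j<m. x i * C i j * x j) - (\<Sum>i<m. \<Sum>j<m. (v i * x i) * (v j * x j)) / c"
        by (simp add: C'_def algebra_simps sum_subtractf sum_divide_distrib)
      also have "(\<Sum>i<m. \<Sum>j<m. (v i * x i) * (v j * x j)) = s * s"
        by (simp add: s_def sum_product)
      finally show "0 \<le> (\<Sum>i<m. \<Sum>j<m. x i * C' i j * x j)" using A by simp
    qed
    have IH: "0 \<le> (\<Sum>i<m. \<Sum>j<m. C' i j * G i j)" using Suc.IH[OF symC' psdC' Gm] .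
    have V: "0 \<le> (\<Sum>i<Suc m. \<Sum>j<Suc m. v i * G i j * v j)"
      by (rule psdD[OF Suc.prems(3)])
    have vm: "v m = c" by (simp add: v_def c_def)
    have Cm: "C m j = v j" if "j < m" for j using symC[of j m] that by (simp add: v_def)
    have "(\<Sum>i<Suc m. \<Sum>j<Suc m. C i j * G i j) =
          (\<Sum>i<m. \<Sum>j<m. C' i j * G i j) + (\<Sum>i<Suc m. \<Sum>j<Suc m. v i * G i j * v j) / c"
    proof -
      have e1: "(\<Sum>i<Suc m. \<Sum>j<Suc m. v i * G i j * v j) / c =
         (\<Sum>i<m. \<Sum>j<m. v i * G i j * v j) / c + (\<Sum>i<m. v i * G i m) + (\<Sum>j<m. G m j * v j) + c * G m m"
        unfolding sum2_Suc vm using c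
        by (simp add: add_divide_distrib sum_divide_distrib power2_eq_square)
      have e2: "(\<Sum>i<m. \<Sum>j<m. C' i j * G i j) =
          (\<Sum>i<m. \<Sum>j<m. C i j * G i j) - (\<Sum>i<m. \<Sum>j<m. v i * G i j * v j) / c"
        by (simp add: C'_def algebra_simps sum_subtractf sum_divide_distrib)
      have e3: "(\<Sum>j<m. C m j * G m j) = (\<Sum>j<m. G m j * v j)"
        using Cm by (intro sum.cong) auto
      have e4: "(\<Sum>i<Suc m. \<Sum>j<Suc m. C i j * G i j) =
          (\<Sum>i<m. \<Sum>j<m. C i j * G i j) + (\<Sum>i<m. v i * G i m) + (\<Sum>j<m. G m j * v j) + c * G m m"
        unfolding sum2_Suc e3[symmetric] by (simp add: v_def c_def)
      show ?thesis unfolding e4 e2 e1 by simp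
    qed
    moreover have "0 \<le> (\<Sum>i<Suc m. \<Sum>j<Suc m. v i * G i j * v j) / c" using V c by simp
    ultimately show ?thesis using IH by simp
  qed
qed

lemma scaleC_zero_left[simp]: "scaleC 0 (x::'a::complex_hilbert) = 0"
  using scaleR_scaleC[of 0 x] by simp

lemma bcl_add: "bounded_clinear f \<Longrightarrow> f (x + y) = f x + f y"
  unfolding bounded_clinear_def by blast

lemma bcl_scaleC: "bounded_clinear f \<Longrightarrow> f (scaleC c x) = scaleC c (f x)"
  unfolding bounded_clinear_def by blast

lemma bcl_zero: "bounded_clinear f \<Longrightarrow> f 0 = 0"
  using bcl_scaleC[of f 0 0] by simp

lemma bcl_scaleR: "bounded_clinear f \<Longrightarrow> f (scaleR r x) = scaleR r (f x)"
  by (simp add: scaleR_scaleC bcl_scaleC)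

lemma bcl_sum: "bounded_clinear f \<Longrightarrow> f (\<Sum>i\<in>A. g i) = (\<Sum>i\<in>A. f (g i))"
  by (induction A rule: infinite_finite_induct) (auto simp: bcl_zero bcl_add)

theorem lemma2:
  fixes n :: nat and \<beta> :: "nat \<Rightarrow> real"
    and M :: "nat \<Rightarrow> 'a::complex_hilbert \<Rightarrow> 'b::complex_hilbert"
    and \<rho> :: "'a \<Rightarrow> 'a"
  assumes "n \<ge> 2"
    and "\<beta> \<in> beta_set n"
    and "\<forall>i<n. bounded_clinear (M i)"
    and "pos_trace_class \<rho>"
  shows "loewner_le
           (\<lambda>y. \<Sum>i<n. scaleR (\<beta> i) (M i (\<rho> (cadjoint (M i) y))))
           (\<lambda>y. (\<lambda>x. \<Sum>i<n. M i x) (\<rho> (cadjoint (\<lambda>x. \<Sum>i<n. M i x) y)))"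
proof -
  have rbc: "bounded_clinear \<rho>" and rpos: "positive_op \<rho>"
    using assms(4) unfolding pos_trace_class_def by auto
  have Mbc: "bounded_clinear (M i)" if "i < n" for i using assms(3) that by blast
  have qpos: "Im (cinner v (\<rho> v)) = 0 \<and> 0 \<le> Re (cinner v (\<rho> v))" for v
    using rpos unfolding positive_op_def by blast
  have psdC: "psd_mat n (\<lambda>i j. 1 - (if i = j then \<beta> i else 0))"
    using assms(2) unfolding beta_set_def by blast
  show ?thesis
    unfolding loewner_le_def positive_op_def
  proof
    fix y :: 'b
    define z where "z i = cadjoint (M i) y" for i
    define w where "w = (\<Sum>i<n. z i)"
    have zi: "cinner (M i x) y = cinner x (z i)" if "i < n" for i x
      unfolding z_def by (rule adjoint_exists[OF Mbc[OF that]])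
    have zi': "cinner y (M i x) = cinner (z i) x" if "i < n" for i x
    proof -
      have "cinner y (M i x) = cnj (cinner (M i x) y)" by (rule cinner_commute)
      also have "\<dots> = cnj (cinner x (z i))" using zi[OF that] by simp
      also have "\<dots> = cinner (z i) x" by (simp add: cinner_commute[of "z i" x])
      finally show ?thesis .
    qed
    have adjN: "cadjoint (\<lambda>x. \<Sum>i<n. M i x) y = w"
    proof (rule adjoint_unique)
      fix x
      have "cinner (\<Sum>i<n. M i x) y = (\<Sum>i<n. cinner (M i x) y)" by (rule cinner_sum_left)
      also have "\<dots> = (\<Sum>i<n. cinner x (z i))" using zi by (intro sum.cong) auto
      also have "\<dots> = cinner x w" unfolding w_def by (rule cinner_sum_right[symmetric])
      finally show "cinner (\<Sum>i<n. M i x) y = cinner x w" .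
    qed
    define q where "q i = cinner (z i) (\<rho> (z i))" for i
    have val: "cinner y ((\<Sum>i<n. M i (\<rho> w)) - (\<Sum>i<n. scaleR (\<beta> i) (M i (\<rho> (z i)))))
       = cinner w (\<rho> w) - (\<Sum>i<n. of_real (\<beta> i) * q i)"
    proof -
      have "cinner y (\<Sum>i<n. M i (\<rho> w)) = (\<Sum>i<n. cinner (z i) (\<rho> w))"
        unfolding cinner_sum_right using zi' by (intro sum.cong) auto
      also have "\<dots> = cinner w (\<rho> w)" unfolding w_def by (rule cinner_sum_left[symmetric])
      finally have a: "cinner y (\<Sum>i<n. M i (\<rho> w)) = cinner w (\<rho> w)" .
      have b: "cinner y (\<Sum>i<n. scaleR (\<beta> i) (M i (\<rho> (z i)))) = (\<Sum>i<n. of_real (\<beta> i) * q i)"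
        unfolding cinner_sum_right cinner_scaleR_right q_def using zi' by (intro sum.cong) auto
      show ?thesis unfolding cinner_diff_right a b ..
    qed
    define G where "G i j = Re (cinner (z i) (\<rho> (z j)))" for i j
    have ReQ: "Re (cinner w (\<rho> w)) = (\<Sum>i<n. \<Sum>j<n. G i j)"
      unfolding w_def G_def bcl_sum[OF rbc] cinner_sum_left cinner_sum_right Re_sum by (rule sum.swap)
    have psdG: "psd_mat n G"
      unfolding psd_mat_def
    proof
      fix x :: "nat \<Rightarrow> real"
      define u where "u = (\<Sum>i<n. scaleR (x i) (z i))"
      have "Re (cinner u (\<rho> u)) = (\<Sum>j<n. \<Sum>i<n. x i * G i j * x j)"
        unfolding u_def G_def bcl_sum[OF rbc] bcl_scaleR[OF rbc] cinner_sum_left cinner_sum_right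
          cinner_scaleR_left cinner_scaleR_right Re_sum
        by (simp add: sum_distrib_left mult_ac)
      also have "\<dots> = (\<Sum>i<n. \<Sum>j<n. x i * G i j * x j)" by (rule sum.swap)
      finally have "Re (cinner u (\<rho> u)) = (\<Sum>i<n. \<Sum>j<n. x i * G i j * x j)" .
      then show "0 \<le> (\<Sum>i<n. \<Sum>j<n. x i * G i j * x j)" using qpos[of u] by simp
    qed
    have tr: "0 \<le> (\<Sum>i<n. \<Sum>j<n. (1 - (if i = j then \<beta> i else 0)) * G i j)"
      by (rule schur_trace[OF _ psdC psdG]) auto
    have tr2: "(\<Sum>i<n. \<Sum>j<n. (1 - (if i = j then \<beta> i else 0)) * G i j)
        = (\<Sum>i<n. \<Sum>j<n. G i j) - (\<Sum>i<n. \<beta> i * G i i)"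
    proof -
      have "(\<Sum>i<n. \<Sum>j<n. (1 - (if i = j then \<beta> i else 0)) * G i j)
          = (\<Sum>i<n. (\<Sum>j<n. G i j) - (\<Sum>j<n. (if i = j then \<beta> i * G i j else 0)))"
        by (intro sum.cong refl) (simp add: left_diff_distrib sum_subtractf if0_mult_left sum.delta sum.delta')
      also have "\<dots> = (\<Sum>i<n. (\<Sum>j<n. G i j) - \<beta> i * G i i)"
        by (intro sum.cong refl) (simp add: sum.delta sum.delta')
      finally show ?thesis by (simp add: sum_subtractf)
    qed
    have ReG: "Re (q i) = G i i" for i by (simp add: q_def G_def)
    have Imq: "Im (q i) = 0" for i using qpos[of "z i"] by (simp add: q_def)
    have goalv: "Im (cinner w (\<rho> w) - (\<Sum>i<n. of_real (\<beta> i) * q i)) = 0 \<and>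
                 0 \<le> Re (cinner w (\<rho> w) - (\<Sum>i<n. of_real (\<beta> i) * q i))"
      using qpos[of w] tr tr2 ReQ by (simp add: Im_sum Re_sum Imq ReG)
    show "Im (cinner y ((\<lambda>x. \<Sum>i<n. M i x) (\<rho> (cadjoint (\<lambda>x. \<Sum>i<n. M i x) y))
               - (\<Sum>i<n. scaleR (\<beta> i) (M i (\<rho> (cadjoint (M i) y)))))) = 0 \<and>
          0 \<le> Re (cinner y ((\<lambda>x. \<Sum>i<n. M i x) (\<rho> (cadjoint (\<lambda>x. \<Sum>i<n. M i x) y))
               - (\<Sum>i<n. scaleR (\<beta> i) (M i (\<rho> (cadjoint (M i) y))))))"
      unfolding adjN z_def[symmetric] using goalv val by simp
  qed
qed

end
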